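(* Let $p>3$ be a prime, $q=p^h$, and $a,b\in\mathbb{F}_{q^2}^*$. Suppose $f_{a,b}(X)=X(1+aX^{q(q-1)}+bX^{2(q-1)})$ is a permutation polynomial of $\mathbb{F}_{q^2}$ and $\deg\gcd(N_{a,b},D_{a,b})=2$. Then $b=v/a^2$ for some $v\in\mathbb{F}_q^*$ with $v^2-a^{q+1}v-a^{3q+3}=0$ and $-3a^{2q+2}-4v\in\square_q^*$.
   Context: A polynomial $f\in\mathbb{F}_{q^2}[X]$ is a permutation polynomial of $\mathbb{F}_{q^2}$ if $x\mapsto f(x)$ is a bijection of $\mathbb{F}_{q^2}$. $N_{a,b}(X)=a^qX^3+X^2+b^q$ and $D_{a,b}(X)=bX^3+X+a$. $\square_q^*$ denotes the set of nonzero squares of $\mathbb{F}_q$. *)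

theory Defs
  imports "HOL-Computational_Algebra.Computational_Algebra"
begin

text \<open>The finite field F_{q^2} is modelled by a finite type of class field_gcd
 (a field with its canonical trivial gcd structure, needed so that gcd of polynomials exists)
 with CARD = q^2.\<close>

definition f_ab :: "nat \<Rightarrow> 'a::field \<Rightarrow> 'a \<Rightarrow> 'a \<Rightarrow> 'a" where
  "f_ab q a b x = x * (1 + a * x ^ (q * (q - 1)) + b * x ^ (2 * (q - 1)))"

definition N_ab :: "nat \<Rightarrow> 'a::field \<Rightarrow> 'a \<Rightarrow> 'a poly" where
  "N_ab q a b = [: b ^ q, 0, 1, a ^ q :]"

definition D_ab :: "nat \<Rightarrow> 'a::field \<Rightarrow> 'a \<Rightarrow> 'a poly" where
  "D_ab q a b = [: a, 1, 0, b :]"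

definition subfield_q :: "nat \<Rightarrow> 'a::field set" where
  "subfield_q q = {x. x ^ q = x}"

definition nonzero_squares_q :: "nat \<Rightarrow> 'a::field set" where
  "nonzero_squares_q q = {y ^ 2 | y. y \<in> subfield_q q \<and> y \<noteq> 0}"

end

theory Submission
  imports Defs "HOL-Number_Theory.Residues"
begin

lemma card_pow_roots:
  fixes z :: "'a::field"
  assumes "k > 0"
  shows "card {y. y ^ k = z} \<le> k" "finite {y. y ^ k = z}"
proof -
  define P where "P = Polynomial.monom (1::'a) k + [:-z:]"
  have deg: "degree P = k" unfolding P_def using assms
    by (subst degree_add_eq_left) (auto simp: degree_monom_eq)
  hence "P \<noteq> 0" using assms by auto
  have eq: "{y. y ^ k = z} = {x. poly P x = 0}" by (auto simp: P_def poly_monom)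
  show "card {y. y ^ k = z} \<le> k" unfolding eq using card_poly_roots_bound[OF \<open>P \<noteq> 0\<close>] deg by simp
  show "finite {y. y ^ k = z}" unfolding eq using poly_roots_finite[OF \<open>P \<noteq> 0\<close>] .
qed

lemma power_card_same:
  fixes x :: "'a::{field,finite}"
  shows "x ^ card (UNIV :: 'a set) = x"
proof (cases "x = 0")
  case False
  have "x * (\<Prod>y\<in>UNIV-{0}. x * y) = x * x ^ (card (UNIV :: 'a set) - 1) * \<Prod>(UNIV-{0})"
    by (simp add: prod.distrib mult_ac)
  also have "x * x ^ (card (UNIV :: 'a set) - 1) = x ^ Suc (card (UNIV :: 'a set) - 1)"
    by (subst power_Suc) auto
  also have "Suc (card (UNIV :: 'a set) - 1) = card (UNIV :: 'a set)"
    using finite_UNIV_card_ge_0[where ?'a = 'a] by simp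
  also have "(\<Prod>y\<in>UNIV-{0}. x * y) = (\<Prod>y\<in>UNIV-{0}. y)"
    by (rule prod.reindex_bij_witness[of _ "\<lambda>y. y / x" "\<lambda>y. x * y"]) (use False in auto)
  finally show ?thesis
    by simp
qed (use finite_UNIV_card_ge_0[where ?'a = 'a] in auto)

lemma pow_surj:
  fixes z :: "'a::{field,finite}"
  assumes km: "k * m = card (UNIV :: 'a set) - 1" and "k > 0" and zm: "z ^ m = 1"
  shows "\<exists>y. y \<noteq> 0 \<and> y ^ k = z"
proof -
  let ?n = "card (UNIV :: 'a set)"
  have n1: "?n \<ge> 2"
  proof -
    have "{0,1} \<subseteq> (UNIV :: 'a set)" by auto
    from card_mono[OF finite_UNIV this] show ?thesis by simp
  qed
  hence "m > 0" using km by (cases m) auto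
  define S where "S = (UNIV :: 'a set) - {0}"
  define g where "g = (\<lambda>y::'a. y ^ k)"
  define M where "M = {y::'a. y ^ m = 1}"
  have cS: "card S = k * m" unfolding S_def using km by (simp add: card_Diff_subset)
  have gS: "g ` S \<subseteq> M"
  proof
    fix t assume "t \<in> g ` S"
    then obtain y where y: "y \<noteq> 0" "t = y ^ k" by (auto simp: S_def g_def)
    have "y * y ^ (?n - 1) = y * 1"
      using power_card_same[of y] n1 by (metis Suc_diff_1 mult_1_right not_gr0 not_numeral_le_zero power_Suc)
    hence "y ^ (?n - 1) = 1" using y by simp
    thus "t \<in> M" using y km by (simp add: M_def power_mult[symmetric])
  qed
  have cM: "card M \<le> m" "finite M" using card_pow_roots[OF \<open>m>0\<close>, of 1] by (auto simp: M_def)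
  have "S = (\<Union>t\<in>g ` S. {y\<in>S. g y = t})" by auto
  hence "card S \<le> (\<Sum>t\<in>g ` S. card {y\<in>S. g y = t})"
    by (metis card_UN_le finite finite_imageI)
  also have "\<dots> \<le> (\<Sum>t\<in>g ` S. k)"
  proof (rule sum_mono)
    fix t
    have "card {y\<in>S. g y = t} \<le> card {y. y ^ k = t}"
      using card_pow_roots[OF \<open>k>0\<close>, of t] by (intro card_mono) (auto simp: g_def)
    thus "card {y\<in>S. g y = t} \<le> k" using card_pow_roots[OF \<open>k>0\<close>, of t] by linarith
  qed
  also have "\<dots> = card (g ` S) * k" by simp
  finally have "k * m \<le> k * card (g ` S)" using cS by (simp add: mult.commute)
  hence "m \<le> card (g ` S)" using \<open>k>0\<close> by simp
  hence "g ` S = M" using card_subset_eq[OF cM(2) gS] cM(1) card_mono[OF cM(2) gS] by linarith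
  moreover have "z \<in> M" using zm by (simp add: M_def)
  ultimately show ?thesis by (auto simp: S_def g_def)
qed


lemma poly_part:
  fixes a b A B :: "'a::field_gcd"
  assumes "b \<noteq> 0"
    and "degree (gcd [: B, 0, 1, A :] [: a, 1, 0, b :]) = 2"
  shows "b * (a*A - b*B) + A^2 + b = 0 \<and> (a*A - b*B) * A + a * b = 0"
proof -
  define N where "N = [: B, 0, 1, A :]"
  define D where "D = [: a, 1, 0, b :]"
  define G where "G = gcd N D"
  define T where "T = Polynomial.smult A D - Polynomial.smult b N"
  have Teq: "T = [: a*A - b*B, A, -b :]"
    by (simp add: T_def N_def D_def mult.commute)
  have degT: "degree T = 2" using assms(1) by (simp add: Teq)
  have degG: "degree G = 2" using assms(2) by (simp add: G_def N_def D_def)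
  have "G dvd T" unfolding T_def G_def
    by (intro dvd_diff dvd_smult) auto
  then obtain K where TK: "T = G * K" by (auto elim: dvdE)
  have "G \<noteq> 0" using degG by auto
  have "T \<noteq> 0" using degT by auto
  hence "K \<noteq> 0" using TK by auto
  have "degree K = 0" using degree_mult_eq[OF \<open>G \<noteq> 0\<close> \<open>K \<noteq> 0\<close>] TK degT degG by simp
  then obtain k where Kk: "K = [:k:]" using degree0_coeffs by blast
  have "k \<noteq> 0" using \<open>K \<noteq> 0\<close> Kk by auto
  have "G = T * [: 1/k :]" using TK Kk \<open>k \<noteq> 0\<close> by (simp add: mult.assoc)
  hence "T dvd G" by (rule dvdI)
  also have "G dvd D" by (simp add: G_def)
  finally obtain Q where DQ: "D = T * Q" by (auto elim: dvdE)
  have "D \<noteq> 0" by (simp add: D_def)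
  hence "Q \<noteq> 0" using DQ by auto
  have "degree D = 3" using assms(1) by (simp add: D_def)
  hence dQ: "degree Q = 1" using degree_mult_eq[OF \<open>T \<noteq> 0\<close> \<open>Q \<noteq> 0\<close>] DQ degT by simp
  obtain s0 Q1 where Q1: "Q = pCons s0 Q1" by (cases Q)
  obtain s1 Q2 where Q2: "Q1 = pCons s1 Q2" by (cases Q1)
  have "Q2 = 0" using dQ Q1 Q2 by (auto split: if_splits)
  hence "D = [: a*A - b*B, A, -b :] * [: s0, s1 :]" using DQ Q1 Q2 Teq by simp
  also have "[: a*A - b*B, A, -b :] * [: s0, s1 :] = [: (a*A - b*B)*s0, (a*A - b*B)*s1 + A*s0, A*s1 - b*s0, -b*s1 :]"
    by (simp add: algebra_simps)
  finally have eqs: "a = (a*A - b*B) * s0" "1 = (a*A - b*B)*s1 + A*s0" "0 = A*s1 - b*s0" "b = -b*s1"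
    unfolding D_def pCons_eq_iff by blast+
  have s1: "s1 = -1" using eqs(4) assms(1)
    by (metis add.inverse_inverse mult_cancel_left1 mult_minus_right)
  have s0: "s0 = - A / b" using eqs(3) assms(1) s1 by (simp add: field_simps)
  show ?thesis using eqs(1,2) s0 s1 assms(1)
    by (auto simp: field_simps power2_eq_square)
qed


lemma frob:
  fixes x y :: "'a::field"
  assumes "prime CHAR('a)" "q = CHAR('a)^h" "odd q"
  shows "(x+y)^q = x^q + y^q" "(-x)^q = -(x^q)" "(x-y)^q = x^q - y^q"
    "(of_nat n :: 'a)^q = of_nat n"
proof -
  show add: "(x+y)^q = x^q + y^q" for x y :: 'a using freshmans_dream'[OF assms(1,2)] .
  show neg: "(-x)^q = -(x^q)" for x :: 'a using assms(3) by simp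
  show "(x-y)^q = x^q - y^q" using add[of x "-y"] neg[of y] by simp
  show "(of_nat n :: 'a)^q = of_nat n"
  proof (induction n)
    case 0 then show ?case using assms(3) by (cases q) auto
  next
    case (Suc n) then show ?case using add[of 1 "of_nat n"] by simp
  qed
qed

lemma char_eq:
  assumes "prime p" "card (UNIV :: 'a::{field,finite} set) = p ^ n"
  shows "CHAR('a) = p"
proof -
  have "prime CHAR('a)" by (rule prime_CHAR_semidom[OF finite_imp_CHAR_pos[OF finite_UNIV]])
  moreover have "CHAR('a) dvd p ^ n" using CHAR_dvd_CARD[where 'a='a] assms(2) by simp
  ultimately have "CHAR('a) dvd p" using prime_dvd_power by blast
  thus ?thesis using \<open>prime CHAR('a)\<close> assms(1) primes_dvd_imp_eq by blast
qed

lemma alg1: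
  fixes a b A B :: "'a::field"
  assumes E1: "b * (a*A - b*B) + A^2 + b = 0" and E2: "(a*A - b*B) * A + a * b = 0"
    and "b \<noteq> 0"
  shows "a*b^2 = A^3 + b*A" "A^2*B = a^2*b" "b*B*A = a*(A^2+b)"
proof -
  show 1: "a*b^2 = A^3 + b*A"
  proof -
    have "a*b^2 - (A^3 + b*A) = - (A * (b * (a*A - b*B) + A^2 + b) - b * ((a*A - b*B) * A + a * b))"
      by (simp add: algebra_simps power2_eq_square power3_eq_cube)
    thus ?thesis using E1 E2 by simp
  qed
  show 3: "b*B*A = a*(A^2+b)"
  proof -
    have "b*B*A - a*(A^2+b) = - ((a*A - b*B) * A + a * b)"
      by (simp add: algebra_simps power2_eq_square)
    thus ?thesis using E2 by simp
  qed
  have "b * (A^2*B) = b * (a^2*b)"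
  proof -
    have "b * (A^2*B) = A * (b*B*A)" by (simp add: algebra_simps power2_eq_square)
    also have "\<dots> = a * (A^3 + b*A)" using 3 by (simp add: algebra_simps power2_eq_square power3_eq_cube)
    also have "\<dots> = a * (a * b^2)" using 1 by simp
    finally show ?thesis by (simp add: algebra_simps power2_eq_square)
  qed
  thus "A^2*B = a^2*b" using assms(3) by simp
qed

lemma alg2:
  fixes a b A B s x y :: "'a::field"
  assumes E1: "b * (a*A - b*B) + A^2 + b = 0" and E2: "(a*A - b*B) * A + a * b = 0"
    and nz: "a \<noteq> 0" "b \<noteq> 0" "A \<noteq> 0" "B \<noteq> 0" "(2::'a) \<noteq> 0"
    and H1: "2*a*b*x = a*A + s" and H2: "2*A*B*y = a*A - s"
    and H3: "s^2 = -3*a^2*A^2 - 4*a^2*b"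
  shows "x*y = 1" "1 + a*y + b*x^2 = 0"
proof -
  have 3: "b*B*A = a*(A^2+b)" using alg1[OF E1 E2 nz(2)] by simp
  have "(4::'a) = 2*2" by simp
  hence four: "(4::'a) \<noteq> 0" using nz(5) by (metis mult_eq_0_iff)
  have "4*a*(b*B*A)*(x*y) = (2*a*b*x)*(2*A*B*y)" by (simp add: algebra_simps)
  also have "\<dots> = (a*A + s)*(a*A - s)" using H1 H2 by simp
  also have "\<dots> = a^2*A^2 - s^2" by (simp add: algebra_simps power2_eq_square)
  also have "\<dots> = 4*a*(a*(A^2+b))" using H3 by (simp add: algebra_simps power2_eq_square)
  also have "\<dots> = 4*a*(b*B*A)" using 3 by simp
  finally have "4*a*(b*B*A)*(x*y) = 4*a*(b*B*A)" .
  moreover have "4*a*(b*B*A) \<noteq> 0" using nz four by simp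
  ultimately show xy: "x*y = 1" by simp
  have "(2*a*b*x - a*A)^2 = s^2" using H1 by simp
  moreover have "4*a^2*(b*(b*x^2 - A*x) + A^2 + b) = (2*a*b*x - a*A)^2 - (-3*a^2*A^2 - 4*a^2*b)"
    by (simp add: algebra_simps power2_eq_square)
  ultimately have "4*a^2*(b*(b*x^2 - A*x) + A^2 + b) = 0" using H3 by simp
  hence T0: "b*(b*x^2 - A*x) + A^2 + b = 0" using nz four by simp
  have "b*(b*(x + a + b*x^3)) = 0"
  proof -
    have "b*(b*(x + a + b*x^3)) = ((b*(b*x^2 - A*x) + A^2 + b) - (b * (a*A - b*B) + A^2 + b)) * (b*x + A) + b*x*(b * (a*A - b*B) + A^2 + b) + b*((a*A - b*B) * A + a * b)"
      by (simp add: algebra_simps power2_eq_square power3_eq_cube)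
    thus ?thesis using T0 E1 E2 by simp
  qed
  hence D0: "x + a + b*x^3 = 0" using nz by simp
  have "x \<noteq> 0" using xy by auto
  have "x*(1 + a*y + b*x^2) = x + a*(x*y) + b*x^3" by (simp add: algebra_simps power2_eq_square power3_eq_cube)
  also have "\<dots> = 0" using xy D0 by simp
  finally show "1 + a*y + b*x^2 = 0" using \<open>x \<noteq> 0\<close> by simp
qed


theorem mainTheorem5:
  fixes p h q :: nat and a b :: "'a::{field_gcd, finite}"
  assumes "prime p" and "p > 3" and "q = p ^ h"
    and "card (UNIV :: 'a set) = q ^ 2"
    and "a \<noteq> 0" and "b \<noteq> 0"
    and "bij (f_ab q a b)"
    and "degree (gcd (N_ab q a b) (D_ab q a b)) = 2"
  shows "\<exists>v. v \<in> subfield_q q \<and> v \<noteq> 0 \<and> b = v / a ^ 2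
           \<and> v ^ 2 - a ^ (q + 1) * v - a ^ (3 * q + 3) = 0
           \<and> - 3 * a ^ (2 * q + 2) - 4 * v \<in> nonzero_squares_q q"
proof -
  define A where "A = a^q"
  define B where "B = b^q"
  have oddp: "odd p" using assms(1,2) prime_odd_nat by auto
  have oddq: "odd q" using oddp assms(3) by simp
  have card2: "card (UNIV :: 'a set) \<ge> 2"
  proof -
    have "{0,1} \<subseteq> (UNIV :: 'a set)" by auto
    from card_mono[OF finite_UNIV this] show ?thesis by simp
  qed
  have q2: "q \<ge> 2"
  proof (rule ccontr)
    assume "\<not> q \<ge> 2"
    hence "q \<le> 1" by simp
    hence "q^2 \<le> 1" by (metis one_power2 power_mono zero_le)
    thus False using card2 assms(4) by simp
  qed
  have cardq: "card (UNIV::'a set) = p^(h*2)" using assms(3,4) by (simp add: power_mult)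
  have chp: "CHAR('a) = p" using char_eq[OF assms(1) cardq] .
  have primeC: "prime CHAR('a)" using chp assms(1) by simp
  have qC: "q = CHAR('a)^h" using chp assms(3) by simp
  note fr = frob[OF primeC qC oddq]
  have xqq: "(x^q)^q = x" for x :: 'a
    using power_card_same[of x] assms(4) by (simp add: power_mult[symmetric] power2_eq_square)
  have two: "(2::'a) \<noteq> 0"
  proof
    assume "(2::'a) = 0"
    hence "(of_nat 2 :: 'a) = 0" by simp
    hence "p dvd 2" using of_nat_eq_0_iff_char_dvd chp by metis
    thus False using assms(2) dvd_imp_le[of p 2] by simp
  qed
  have n3: "(3::'a)^q = 3" using fr(4)[of 3] by simp
  have n4: "(4::'a)^q = 4" using fr(4)[of 4] by simp
  have n2: "(2::'a)^q = 2" using fr(4)[of 2] by simp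
  have "A \<noteq> 0" "B \<noteq> 0" using assms(5,6) by (simp_all add: A_def B_def)
  have "b * (a*A - b*B) + A^2 + b = 0 \<and> (a*A - b*B) * A + a * b = 0"
    using poly_part[of b B A a] assms(6,8) unfolding N_ab_def D_ab_def A_def B_def by simp
  hence E1: "b * (a*A - b*B) + A^2 + b = 0" and E2: "(a*A - b*B) * A + a * b = 0" by auto
  note alg = alg1[OF E1 E2 assms(6)]
  define v where "v = a^2*b"
  have vnz: "v \<noteq> 0" using assms(5,6) by (simp add: v_def)
  have beq: "b = v / a^2" using assms(5) by (simp add: v_def)
  have a2q: "(a^2)^q = A^2" by (simp add: A_def power_mult[symmetric] mult.commute)
  have vq: "v^q = v" using alg(2) by (simp add: v_def power_mult_distrib a2q B_def[symmetric])
  have aq1: "a^(q+1) = a*A" by (simp add: A_def)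
  have aq3: "a^(3*q+3) = a^3*A^3"
    by (simp add: A_def power_add power_mult_distrib power_mult[symmetric] mult.commute)
  have aq2: "a^(2*q+2) = a^2*A^2"
  proof -
    have "a^(2*q) = (a^q)^2" by (metis power_mult mult.commute)
    thus ?thesis unfolding A_def by (metis power_add mult.commute)
  qed
  have quad: "v ^ 2 - a ^ (q + 1) * v - a ^ (3 * q + 3) = 0"
  proof -
    have "v ^ 2 - a ^ (q + 1) * v - a ^ (3 * q + 3) = a^3 * (a*b^2 - (A^3 + b*A))"
      unfolding aq1 aq3 v_def by (simp add: algebra_simps power2_eq_square power3_eq_cube)
    thus ?thesis using alg(1) by simp
  qed
  define w where "w = - 3 * a ^ (2 * q + 2) - 4 * v"
  have weq: "w = - (3 * (a*A)^2) - 4*v" unfolding w_def aq2 by (simp add: power_mult_distrib)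
  have aAq: "(a*A)^q = a*A" by (simp add: power_mult_distrib A_def xqq mult.commute)
  have aA2q: "((a*A)^2)^q = (a*A)^2"
  proof -
    have "((a*A)^2)^q = ((a*A)^q)^2" by (metis power_mult mult.commute)
    thus ?thesis using aAq by simp
  qed
  have wq: "w^q = w"
    unfolding weq fr(3) fr(2) power_mult_distrib[of 3] power_mult_distrib[of 4] n3 n4 vq aA2q by simp
  have wsq: "w \<in> nonzero_squares_q q"
  proof (rule ccontr)
    assume nsq: "w \<notin> nonzero_squares_q q"
    obtain s where s2: "s^2 = w"
    proof (cases "w = 0")
      case True then show ?thesis using that[of 0] by simp
    next
      case False
      have "w * w^(q-1) = w * 1" using wq q2 by (metis Suc_diff_1 mult_1_right not_gr0 not_numeral_le_zero power_Suc)
      hence w1: "w^(q-1) = 1" using False by simp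
      obtain k where kq: "q = 2*k+1" using oddq oddE by blast
      define m where "m = (q-1)*(k+1)"
      have "2*m = card (UNIV::'a set) - 1" unfolding m_def assms(4) kq
        by (simp add: power2_eq_square algebra_simps)
      moreover have "w^m = 1" unfolding m_def power_mult w1 by simp
      ultimately obtain y where "y^2 = w" using pow_surj[of 2 m w] by auto
      thus ?thesis using that by blast
    qed
    have sq: "s^q = -s"
    proof -
      have "(s^q)^2 = (s^2)^q" by (metis power_mult mult.commute)
      hence "(s^q)^2 = s^2" using s2 wq by simp
      hence "(s^q - s)*(s^q + s) = 0" by (simp add: algebra_simps power2_eq_square)
      moreover have "s^q \<noteq> s \<or> s = 0"
      proof (rule ccontr)
        assume "\<not> (s^q \<noteq> s \<or> s = 0)"
        hence "s \<in> subfield_q q" "s \<noteq> 0" by (auto simp: subfield_q_def)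
        hence "w \<in> nonzero_squares_q q" using s2 by (auto simp: nonzero_squares_q_def)
        thus False using nsq by simp
      qed
      ultimately have "s^q - s = 0 \<or> s^q + s = 0" by (simp only: mult_eq_0_iff)
      thus ?thesis unfolding eq_neg_iff_add_eq_0 using \<open>s^q \<noteq> s \<or> s = 0\<close> by auto
    qed
    define x where "x = (A + s/a)/(2*b)"
    have H1: "2*a*b*x = a*A + s"
    proof -
      have "2*b*x = A + s/a" using two assms(6) unfolding x_def by simp
      hence "a*(2*b*x) = a*(A + s/a)" by simp
      also have "\<dots> = a*A + s" using assms(5) by (simp add: distrib_left)
      finally show ?thesis by (simp add: mult.assoc mult.left_commute)
    qed
    have xq: "x^q = (a - s/A)/(2*B)"
    proof -
      have "x^q = (A^q + s^q/a^q) / (2^q * b^q)"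
        unfolding x_def power_divide fr(1) power_mult_distrib by simp
      also have "\<dots> = (a - s/A)/(2*B)" unfolding sq n2 A_def B_def xqq by simp
      finally show ?thesis .
    qed
    have H2: "2*A*B*x^q = a*A - s"
    proof -
      have "2*B*x^q = a - s/A" using two \<open>B \<noteq> 0\<close> unfolding xq by simp
      hence "A*(2*B*x^q) = A*(a - s/A)" by simp
      also have "\<dots> = a*A - s" using \<open>A \<noteq> 0\<close> by (simp add: right_diff_distrib mult.commute)
      finally show ?thesis by (simp add: mult.assoc mult.left_commute)
    qed
    have H3: "s^2 = -3*a^2*A^2 - 4*a^2*b" using s2 unfolding w_def aq2 v_def by simp
    have xy: "x * x^q = 1" and zero: "1 + a*x^q + b*x^2 = 0"
      using alg2[OF E1 E2 assms(5,6) \<open>A \<noteq> 0\<close> \<open>B \<noteq> 0\<close> two H1 H2 H3] by auto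
    have "x^(q+1) = 1" using xy by (simp add: mult.commute)
    moreover have "(q-1)*(q+1) = card (UNIV::'a set) - 1" using q2 unfolding assms(4)
      by (simp add: power2_eq_square algebra_simps)
    ultimately obtain z where z: "z \<noteq> 0" "z^(q-1) = x" using pow_surj[of "q-1" "q+1" x] q2 by auto
    have "f_ab q a b z = z * (1 + a*x^q + b*x^2)"
    proof -
      have e1: "z^(q*(q-1)) = x^q" using z(2) by (metis power_mult mult.commute)
      have e2: "z^(2*(q-1)) = x^2" using z(2) by (metis power_mult mult.commute)
      show ?thesis unfolding f_ab_def e1 e2 ..
    qed
    also have "\<dots> = 0" using zero by simp
    also have "0 = f_ab q a b 0" by (simp add: f_ab_def)
    finally have "z = 0" using bij_is_inj[OF assms(7)] by (simp add: inj_eq)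
    thus False using z(1) by simp
  qed
  show ?thesis
    by (intro exI[of _ v]) (use vq vnz beq quad wsq in \<open>simp add: subfield_q_def w_def\<close>)
qed

end
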